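(* Let $(\Sigma,\mathscr{P})$ be a Kelvin-Planck theory with a Clausius-Duhem pair $(\eta^\circ,T^\circ)$, and let $(\mathscr{v},\mathscr{w})\in\mathscr{V}(\Sigma)$ satisfy $\int_\Sigma\eta^\circ\,d\mathscr{v}-\int_\Sigma\frac{d\mathscr{w}}{T^\circ}=0$. If $(\mathscr{v},\mathscr{w})\notin\hat{\mathscr{P}}$, then there is another Clausius-Duhem pair $(\eta,T)$ such that $\int_\Sigma\eta\,d\mathscr{v}-\int_\Sigma\frac{d\mathscr{w}}{T}<0$.
   Context: $\Sigma$ is a compact Hausdorff space. $\mathscr{M}(\Sigma)$ is the vector space of regular signed Borel measures on $\Sigma$ with its weak-star topology; $\mathscr{M}_+(\Sigma)$ the nonnegative members; $\mathscr{M}^\circ(\Sigma)=\{\mu:\mu(\Sigma)=0\}$; $\mathscr{V}(\Sigma)=\mathscr{M}^\circ(\Sigma)\oplus\mathscr{M}(\Sigma)$ with the product topology. For $\mathscr{P}\subset\mathscr{V}(\Sigma)$, $\hat{\mathscr{P}}$ is the closure of the set of nonnegative multiples of members of $\mathscr{P}$. A thermodynamical theory is $(\Sigma,\mathscr{P})$ with $\hat{\mathscr{P}}$ convex; it is Kelvin-Planck if $\hat{\mathscr{P}}\cap\{(0,\nu):\nu\in\mathscr{M}_+(\Sigma)\}=\{(0,0)\}$. A Clausius-Duhem pair is $(\eta,T)$, $\eta\in C(\Sigma,\mathbb{R})$, $T\in C(\Sigma,(0,\infty))$, with $\int_\Sigma\eta\,d(\Delta\mathscr{m})\ge\int_\Sigma\frac{d\mathscr{q}}{T}$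 for all $(\Delta\mathscr{m},\mathscr{q})\in\mathscr{P}$. *)

theory Defs
  imports "HOL-Analysis.Analysis"
begin

text \<open>The compact Hausdorff space Sigma is the universe of a type 'a :: t2_space
  (compactness is assumed in the theorem).  A signed measure is represented by its
  real-valued set function on the Borel sets (value 0 off the Borel sets).\<close>

type_synonym 'a smeasure = "'a set \<Rightarrow> real"

definition signed_measure :: "('a::topological_space) smeasure \<Rightarrow> bool" where
  "signed_measure \<mu> \<longleftrightarrow>
     (\<forall>A. A \<notin> sets borel \<longrightarrow> \<mu> A = 0) \<and> \<mu> {} = 0 \<and>
     (\<forall>F::nat \<Rightarrow> 'a set. range F \<subseteq> sets borel \<and> disjoint_family F \<longrightarrow>
        (\<lambda>n. \<mu> (F n)) sums \<mu> (\<Union>n. F n))"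

definition tvar :: "('a::topological_space) smeasure \<Rightarrow> 'a set \<Rightarrow> real" where
  "tvar \<mu> A = (SUP P \<in> {P. finite P \<and> P \<subseteq> sets borel \<and> disjoint P \<and> \<Union>P = A}.
                  \<Sum>B\<in>P. \<bar>\<mu> B\<bar>)"

definition regular_setfun :: "('a::topological_space) smeasure \<Rightarrow> bool" where
  "regular_setfun \<nu> \<longleftrightarrow>
     (\<forall>A \<in> sets borel.
        \<nu> A = (SUP K \<in> {K. compact K \<and> K \<subseteq> A}. \<nu> K) \<and>
        \<nu> A = (INF U \<in> {U. open U \<and> A \<subseteq> U}. \<nu> U))"

definition Msp :: "('a::topological_space) smeasure set" where
  "Msp = {\<mu>. signed_measure \<mu> \<and> regular_setfun (tvar \<mu>)}"

definition Mplus :: "('a::topological_space) smeasure set" where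
  "Mplus = {\<mu> \<in> Msp. \<forall>A. \<mu> A \<ge> 0}"

definition Mzero :: "('a::topological_space) smeasure set" where
  "Mzero = {\<mu> \<in> Msp. \<mu> UNIV = 0}"

definition Vsp :: "(('a::topological_space) smeasure \<times> 'a smeasure) set" where
  "Vsp = Mzero \<times> Msp"

definition pos_part :: "('a::topological_space) smeasure \<Rightarrow> 'a measure" where
  "pos_part \<mu> = measure_of UNIV (sets borel) (\<lambda>A. ennreal ((tvar \<mu> A + \<mu> A) / 2))"

definition neg_part :: "('a::topological_space) smeasure \<Rightarrow> 'a measure" where
  "neg_part \<mu> = measure_of UNIV (sets borel) (\<lambda>A. ennreal ((tvar \<mu> A - \<mu> A) / 2))"

definition sint :: "('a::topological_space) smeasure \<Rightarrow> ('a \<Rightarrow> real) \<Rightarrow> real" where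
  "sint \<mu> f = integral\<^sup>L (pos_part \<mu>) f - integral\<^sup>L (neg_part \<mu>) f"

text \<open>Closure in V(Sigma) with respect to the product of the weak-star topologies
  (basic neighbourhoods given by finitely many continuous test functions).\<close>
definition wstar_closure ::
    "(('a::topological_space) smeasure \<times> 'a smeasure) set \<Rightarrow> ('a smeasure \<times> 'a smeasure) set" where
  "wstar_closure S = {x \<in> Vsp. \<forall>F. finite F \<and> (\<forall>f\<in>F. continuous_on UNIV f) \<longrightarrow>
      (\<forall>\<epsilon>>0. \<exists>y\<in>S. \<forall>f\<in>F. \<bar>sint (fst y) f - sint (fst x) f\<bar> < \<epsilon> \<and>
                                 \<bar>sint (snd y) f - sint (snd x) f\<bar> < \<epsilon>)}"

definition hatP ::
    "(('a::topological_space) smeasure \<times> 'a smeasure) set \<Rightarrow> ('a smeasure \<times> 'a smeasure) set" where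
  "hatP P = wstar_closure {((\<lambda>A. c * v A), (\<lambda>A. c * w A)) | c v w. c \<ge> 0 \<and> (v, w) \<in> P}"

definition convex_pairs :: "('a smeasure \<times> 'a smeasure) set \<Rightarrow> bool" where
  "convex_pairs S \<longleftrightarrow> (\<forall>x\<in>S. \<forall>y\<in>S. \<forall>t::real. 0 \<le> t \<and> t \<le> 1 \<longrightarrow>
      ((\<lambda>A. t * fst x A + (1 - t) * fst y A), (\<lambda>A. t * snd x A + (1 - t) * snd y A)) \<in> S)"

definition thermo_theory :: "(('a::topological_space) smeasure \<times> 'a smeasure) set \<Rightarrow> bool" where
  "thermo_theory P \<longleftrightarrow> P \<subseteq> Vsp \<and> convex_pairs (hatP P)"

definition kelvin_planck :: "(('a::topological_space) smeasure \<times> 'a smeasure) set \<Rightarrow> bool" where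
  "kelvin_planck P \<longleftrightarrow> thermo_theory P \<and>
     hatP P \<inter> {((\<lambda>A. 0), \<nu>) | \<nu>. \<nu> \<in> Mplus} = {((\<lambda>A. 0), (\<lambda>A. 0))}"

definition CD_pair ::
    "(('a::topological_space) smeasure \<times> 'a smeasure) set \<Rightarrow> ('a \<Rightarrow> real) \<Rightarrow> ('a \<Rightarrow> real) \<Rightarrow> bool" where
  "CD_pair P \<eta> T \<longleftrightarrow> continuous_on UNIV \<eta> \<and> continuous_on UNIV T \<and> (\<forall>x. T x > 0) \<and>
     (\<forall>(dm, q) \<in> P. sint dm \<eta> \<ge> sint q (\<lambda>x. 1 / T x))"

end

theory Submission
  imports Defs
begin


lemma sm_empty: "signed_measure \<mu> \<Longrightarrow> \<mu> {} = 0"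
  by (simp add: signed_measure_def)

lemma sm_add:
  assumes sm: "signed_measure \<mu>" and A: "A \<in> sets borel" and B: "B \<in> sets borel"
    and d: "A \<inter> B = {}"
  shows "\<mu> (A \<union> B) = \<mu> A + \<mu> B"
proof -
  define F where "F = (\<lambda>n::nat. if n = 0 then A else if n = 1 then B else {})"
  have "range F \<subseteq> sets borel" using A B by (auto simp: F_def)
  moreover have "disjoint_family F" using d
    by (auto simp: disjoint_family_on_def F_def)
  ultimately have s: "(\<lambda>n. \<mu> (F n)) sums \<mu> (\<Union>n. F n)" using sm by (simp add: signed_measure_def)
  have U: "(\<Union>n. F n) = A \<union> B"
    by (auto simp: F_def split: if_splits)
  have "(\<lambda>n. \<mu> (F n)) sums (\<Sum>n\<in>{0,1}. \<mu> (F n))"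
    by (rule sums_finite) (auto simp: F_def sm_empty[OF sm])
  then have "\<mu> (A \<union> B) = (\<Sum>n\<in>{0,1}. \<mu> (F n))" using s U sums_unique2 by metis
  then show ?thesis by (simp add: F_def)
qed

lemma sm_sums:
  assumes "signed_measure \<mu>" "\<And>i. F i \<in> sets borel" "disjoint_family F"
  shows "(\<lambda>n. \<mu> (F n)) sums \<mu> (\<Union>n. F n)"
  using assms unfolding signed_measure_def by blast

lemma sm_split:
  assumes sm: "signed_measure \<mu>" and A: "A \<in> sets borel" and B: "B \<in> sets borel"
  shows "\<mu> A = \<mu> (A \<inter> B) + \<mu> (A - B)"
proof -
  have "A = (A \<inter> B) \<union> (A - B)" by auto
  then show ?thesis using sm_add[OF sm, of "A \<inter> B" "A - B"] A B by auto
qed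

lemma sm_finite_union:
  assumes sm: "signed_measure \<mu>" and C: "C \<in> sets borel"
  shows "finite P \<Longrightarrow> P \<subseteq> sets borel \<Longrightarrow> disjoint P \<Longrightarrow> (\<Sum>B\<in>P. \<mu> (B \<inter> C)) = \<mu> (\<Union>P \<inter> C)"
proof (induction P rule: finite_induct)
  case empty then show ?case by (simp add: sm_empty[OF sm])
next
  case (insert B P)
  have dj: "B \<inter> \<Union>P = {}" using insert.prems(2) insert.hyps(2)
    by (auto simp: pairwise_insert disjnt_def)
  have "(\<Union>(insert B P) \<inter> C) = (B \<inter> C) \<union> (\<Union>P \<inter> C)" by auto
  moreover have "\<Union>P \<in> sets borel" using insert by (intro sets.finite_Union) auto
  ultimately have "\<mu> (\<Union>(insert B P) \<inter> C) = \<mu> (B \<inter> C) + \<mu> (\<Union>P \<inter> C)"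
    using sm_add[OF sm, of "B \<inter> C" "\<Union>P \<inter> C"] insert.prems C dj by auto
  then show ?case using insert by (auto simp: pairwise_insert)
qed

lemma sm_finite_union_idx:
  assumes sm: "signed_measure \<mu>" and D: "\<And>i. D i \<in> sets borel" and dj: "disjoint_family D"
  shows "(\<Sum>i<(n::nat). \<mu> (D i)) = \<mu> (\<Union>i<n. D i)"
proof (induction n)
  case 0 then show ?case by (simp add: sm_empty[OF sm])
next
  case (Suc n)
  have "(\<Union>i<Suc n. D i) = (\<Union>i<n. D i) \<union> D n" by (auto simp: lessThan_Suc)
  moreover have "(\<Union>i<n. D i) \<inter> D n = {}" using dj
    by (auto simp: disjoint_family_on_def) (metis IntI empty_iff less_irrefl)
  moreover have "(\<Union>i<n. D i) \<in> sets borel" using D by auto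
  ultimately have "\<mu> (\<Union>i<Suc n. D i) = \<mu> (\<Union>i<n. D i) + \<mu> (D n)"
    using sm_add[OF sm, of "\<Union>i<n. D i" "D n"] D by presburger
  then show ?case using Suc.IH by simp
qed

lemma sm_incseq:
  assumes sm: "signed_measure \<mu>" and A: "\<And>i. A i \<in> sets borel" and inc: "incseq A"
  shows "(\<lambda>n. \<mu> (A n)) \<longlonglongrightarrow> \<mu> (\<Union>n. A n)"
proof -
  have D: "\<And>i. disjointed A i \<in> sets borel" using sets.range_disjointed_sets[of A borel] A by auto
  have "(\<lambda>n. \<mu> (disjointed A n)) sums \<mu> (\<Union>n. disjointed A n)"
    using sm_sums[OF sm D disjoint_family_disjointed] .
  then have "(\<lambda>n. \<Sum>i<n. \<mu> (disjointed A i)) \<longlonglongrightarrow> \<mu> (\<Union>n. A n)"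
    by (simp add: sums_def UN_disjointed_eq)
  moreover have "(\<Sum>i<Suc n. \<mu> (disjointed A i)) = \<mu> (A n)" for n
  proof -
    have "(\<Sum>i<Suc n. \<mu> (disjointed A i)) = \<mu> (\<Union>i<Suc n. disjointed A i)"
      by (rule sm_finite_union_idx[OF sm D disjoint_family_disjointed])
    also have "(\<Union>i<Suc n. disjointed A i) = (\<Union>i<Suc n. A i)"
      using finite_UN_disjointed_eq[of A "Suc n"] by (simp add: atLeast0LessThan)
    also have "\<dots> = A n" using inc by (auto simp: incseq_def lessThan_Suc_atMost)
    finally show ?thesis .
  qed
  ultimately show ?thesis using LIMSEQ_Suc[of "\<lambda>n. \<Sum>i<n. \<mu> (disjointed A i)"] by simp
qed

lemma sm_compl: "signed_measure \<mu> \<Longrightarrow> X \<in> sets borel \<Longrightarrow> \<mu> (- X) = \<mu> UNIV - \<mu> X"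
proof -
  assume a: "signed_measure \<mu>" "X \<in> sets borel"
  have e: "UNIV - X = - X" by blast
  show ?thesis using sm_split[OF a(1), of UNIV X] a(2) unfolding e by simp
qed

lemma sm_decseq:
  assumes sm: "signed_measure \<mu>" and A: "\<And>i. A i \<in> sets borel" and dec: "decseq A"
  shows "(\<lambda>n. \<mu> (A n)) \<longlonglongrightarrow> \<mu> (\<Inter>n. A n)"
proof -
  have l: "(\<lambda>n. \<mu> (- A n)) \<longlonglongrightarrow> \<mu> (\<Union>n. - A n)"
  proof (rule sm_incseq[OF sm])
    show "\<And>i. - A i \<in> sets borel" using A by (simp add: sets.compl_sets)
    show "incseq (\<lambda>n. - A n)"
    proof (rule incseq_SucI)
      fix n show "- A n \<subseteq> - A (Suc n)" using decseq_SucD[OF dec, of n] by blast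
    qed
  qed
  have U: "(\<Union>n. - A n) = - (\<Inter>n. A n)" by auto
  have I: "(\<Inter>n. A n) \<in> sets borel" using A by auto
  have e: "\<mu> (\<Union>n. - A n) = \<mu> UNIV - \<mu> (\<Inter>n. A n)" unfolding U by (rule sm_compl[OF sm I])
  have e2: "\<And>n. \<mu> (- A n) = \<mu> UNIV - \<mu> (A n)" using sm_compl[OF sm A] .
  have "(\<lambda>n. \<mu> UNIV - \<mu> (A n)) \<longlonglongrightarrow> \<mu> UNIV - \<mu> (\<Inter>n. A n)"
    using l unfolding e e2 .
  then have "(\<lambda>n. \<mu> UNIV - (\<mu> UNIV - \<mu> (A n))) \<longlonglongrightarrow> \<mu> UNIV - (\<mu> UNIV - \<mu> (\<Inter>n. A n))"
    by (rule tendsto_diff[OF tendsto_const])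
  moreover have h: "\<And>a b::real. a - (a - b) = b" by simp
  ultimately show ?thesis by (simp only: h)
qed



definition sbdd :: "'a::topological_space smeasure \<Rightarrow> 'a set \<Rightarrow> bool" where
  "sbdd \<mu> E \<longleftrightarrow> (\<exists>B. \<forall>G\<in>sets borel. G \<subseteq> E \<longrightarrow> \<bar>\<mu> G\<bar> \<le> B)"

lemma sm_unbdd_split:
  assumes sm: "signed_measure \<mu>" and E: "E \<in> sets borel" and nb: "\<not> sbdd \<mu> E"
  shows "\<exists>F\<in>sets borel. F \<subseteq> E \<and> \<bar>\<mu> F\<bar> \<ge> 1 \<and> \<not> sbdd \<mu> (E - F)"
proof -
  obtain F0 where F0: "F0 \<in> sets borel" "F0 \<subseteq> E" "\<bar>\<mu> F0\<bar> > \<bar>\<mu> E\<bar> + 1"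
    using nb unfolding sbdd_def by (metis not_le)
  have eq: "\<mu> E = \<mu> (E \<inter> F0) + \<mu> (E - F0)" by (rule sm_split[OF sm E F0(1)])
  have "E \<inter> F0 = F0" using F0 by auto
  then have big: "\<bar>\<mu> (E - F0)\<bar> \<ge> 1" using eq F0(3) by (simp add: abs_if split: if_splits)
  have "\<not> sbdd \<mu> (E - F0) \<or> \<not> sbdd \<mu> F0"
  proof (rule ccontr)
    assume "\<not> ?thesis"
    then obtain B1 B2 where B1: "\<forall>G\<in>sets borel. G \<subseteq> E - F0 \<longrightarrow> \<bar>\<mu> G\<bar> \<le> B1"
      and B2: "\<forall>G\<in>sets borel. G \<subseteq> F0 \<longrightarrow> \<bar>\<mu> G\<bar> \<le> B2" unfolding sbdd_def by blast
    have "\<forall>G\<in>sets borel. G \<subseteq> E \<longrightarrow> \<bar>\<mu> G\<bar> \<le> B2 + B1"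
    proof (intro ballI impI)
      fix G assume G: "G \<in> sets borel" "G \<subseteq> E"
      have "\<mu> G = \<mu> (G \<inter> F0) + \<mu> (G - F0)" by (rule sm_split[OF sm G(1) F0(1)])
      moreover have "\<bar>\<mu> (G \<inter> F0)\<bar> \<le> B2" using B2 G F0 by blast
      moreover have "\<bar>\<mu> (G - F0)\<bar> \<le> B1" using B1 G F0 by blast
      ultimately show "\<bar>\<mu> G\<bar> \<le> B2 + B1" by linarith
    qed
    then show False using nb unfolding sbdd_def by blast
  qed
  then show ?thesis
  proof
    assume "\<not> sbdd \<mu> (E - F0)" then show ?thesis using F0 big by (intro bexI[of _ F0]) auto
  next
    assume h: "\<not> sbdd \<mu> F0"
    have "E - (E - F0) = F0" using F0 by auto
    then show ?thesis using h big F0 E by (intro bexI[of _ "E - F0"]) auto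
  qed
qed

lemma sm_bounded:
  assumes sm: "signed_measure \<mu>"
  shows "\<exists>B. \<forall>G\<in>sets borel. \<bar>\<mu> G\<bar> \<le> B"
proof (rule ccontr)
  assume nb0: "\<not> ?thesis"
  then have nb: "\<not> sbdd \<mu> UNIV" unfolding sbdd_def by auto
  define step where "step E = (SOME F. F \<in> sets borel \<and> F \<subseteq> E \<and> \<bar>\<mu> F\<bar> \<ge> 1 \<and> \<not> sbdd \<mu> (E - F))" for E
  have step: "step E \<in> sets borel \<and> step E \<subseteq> E \<and> \<bar>\<mu> (step E)\<bar> \<ge> 1 \<and> \<not> sbdd \<mu> (E - step E)"
    if "E \<in> sets borel" "\<not> sbdd \<mu> E" for E
    unfolding step_def by (rule someI_ex) (use sm_unbdd_split[OF sm that] in blast)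
  define E where "E n = ((\<lambda>X. X - step X) ^^ n) UNIV" for n
  have E_Suc: "E (Suc n) = E n - step (E n)" for n by (simp add: E_def)
  have Einv: "E n \<in> sets borel \<and> \<not> sbdd \<mu> (E n)" for n
  proof (induction n)
    case 0 then show ?case using nb by (simp add: E_def)
  next
    case (Suc n) then show ?case using step[of "E n"] by (simp add: E_Suc sets.Diff)
  qed
  define D where "D n = step (E n)" for n
  have D: "D n \<in> sets borel" "D n \<subseteq> E n" "\<bar>\<mu> (D n)\<bar> \<ge> 1" for n
    using step[of "E n"] Einv[of n] by (auto simp: D_def)
  have Edec: "E n \<subseteq> E m" if "m \<le> n" for m n
    using that
  proof (induction rule: dec_induct)
    case base then show ?case by simp
  next
    case (step k) then show ?case by (auto simp: E_Suc)
  qed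
  have dj: "D m \<inter> D n = {}" if "m < n" for m n
  proof -
    have "D n \<subseteq> E (Suc m)" using D(2)[of n] Edec[of "Suc m" n] that by auto
    moreover have "D m \<inter> E (Suc m) = {}" by (auto simp: E_Suc D_def)
    ultimately show ?thesis by auto
  qed
  have "disjoint_family D"
    unfolding disjoint_family_on_def
    by (metis Int_commute dj nat_neq_iff)
  then have "(\<lambda>n. \<mu> (D n)) sums \<mu> (\<Union>n. D n)" by (rule sm_sums[OF sm D(1)])
  then have "(\<lambda>n. \<mu> (D n)) \<longlonglongrightarrow> 0" using summable_LIMSEQ_zero sums_summable by blast
  then obtain N where "\<forall>n\<ge>N. dist (\<mu> (D n)) 0 < 1" using LIMSEQ_D[of _ 0 1] by (metis lim_sequentially zero_less_one)
  then have "\<bar>\<mu> (D N)\<bar> < 1" by auto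
  then show False using D(3)[of N] by linarith
qed



lemma sm_hahn:
  assumes sm: "signed_measure \<mu>"
  shows "\<exists>H\<in>sets borel. (\<forall>X\<in>sets borel. X \<subseteq> H \<longrightarrow> 0 \<le> \<mu> X) \<and> (\<forall>X\<in>sets borel. X \<inter> H = {} \<longrightarrow> \<mu> X \<le> 0)"
proof -
  define d where "d = \<mu>"
  obtain Bd where Bd: "\<forall>G\<in>sets borel. \<bar>\<mu> G\<bar> \<le> Bd" using sm_bounded[OF sm] by blast
  have bdd: "bdd_above (d ` sets borel)"
    using Bd by (intro bdd_aboveI[where M=Bd]) (auto simp: d_def abs_le_iff)
  define \<gamma> where "\<gamma> = (SUP X\<in>sets borel. d X)"
  have le_\<gamma>[intro]: "X \<in> sets borel \<Longrightarrow> d X \<le> \<gamma>" for X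
    using bdd by (auto simp: \<gamma>_def intro!: cSUP_upper)
  have "\<exists>X\<in>sets borel. \<gamma> - 1 / 2^n < d X" for n
    unfolding \<gamma>_def using bdd by (intro less_cSUP_iff[THEN iffD1]) auto
  then have "\<exists>f. \<forall>n. f n \<in> sets borel \<and> d (f n) > \<gamma> - 1 / 2^n"
    by metis
  then obtain E where Em: "\<And>n. E n \<in> sets borel" and E: "\<And>n. d (E n) > \<gamma> - 1 / 2^n"
    by auto
  define F where "F m n = (if m \<le> n then \<Inter>i\<in>{m..n}. E i else UNIV)" for m n
  have Fm: "F m n \<in> sets borel" for m n
    using Em by (auto simp: F_def)
  have add: "d (X \<union> Y) = d X + d (Y - X)" if "X \<in> sets borel" "Y \<in> sets borel" for X Y
  proof -
    have "X \<union> Y = X \<union> (Y - X)" by auto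
    then show ?thesis unfolding d_def using sm_add[OF sm, of X "Y - X"] that by auto
  qed
  have spl: "d X = d (X - Y) + d (X \<inter> Y)" if "X \<in> sets borel" "Y \<in> sets borel" for X Y
    using sm_split[OF sm that] unfolding d_def by simp
  have 1: "\<gamma> - 2 / 2 ^ m + 1 / 2 ^ n \<le> d (F m n)" if "m \<le> n" for m n
    using that
  proof (induct rule: dec_induct)
    case base with E[of m] show ?case
      by (simp add: F_def field_simps)
  next
    case (step i)
    have F_Suc: "F m (Suc i) = F m i \<inter> E (Suc i)"
      using \<open>m \<le> i\<close> by (auto simp: F_def le_Suc_eq)
    have "\<gamma> + (\<gamma> - 2 / 2^m + 1 / 2 ^ Suc i) \<le> (\<gamma> - 1 / 2^Suc i) + (\<gamma> - 2 / 2^m + 1 / 2^i)"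
      by (simp add: field_simps)
    also have "\<dots> \<le> d (E (Suc i)) + d (F m i)"
      using E[of "Suc i"] by (intro add_mono step) auto
    also have "\<dots> = d (E (Suc i)) + d (F m i - E (Suc i)) + d (F m (Suc i))"
      using spl[OF Fm Em, of m i "Suc i"] unfolding F_Suc by simp
    also have "\<dots> = d (E (Suc i) \<union> F m i) + d (F m (Suc i))"
      using add[OF Em Fm, of "Suc i" m i] by simp
    also have "\<dots> \<le> \<gamma> + d (F m (Suc i))"
      using Em Fm by auto
    finally show ?case
      by auto
  qed
  define F' where "F' m = (\<Inter>i\<in>{m..}. E i)" for m
  have F'_eq: "F' m = (\<Inter>i. F m (i + m))" for m
    by (fastforce simp: le_iff_add[of m] F'_def F_def)
  have F'm: "F' m \<in> sets borel" for m
    using Em by (auto simp: F'_def)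
  have \<gamma>_le: "\<gamma> - 0 \<le> d (\<Union>m. F' m)"
  proof (rule LIMSEQ_le)
    show "(\<lambda>n. \<gamma> - 2 / 2 ^ n) \<longlonglongrightarrow> \<gamma> - 0"
      by (intro tendsto_intros LIMSEQ_divide_realpow_zero) auto
    have "incseq F'"
      by (auto simp: incseq_def F'_def)
    then show "(\<lambda>m. d (F' m)) \<longlonglongrightarrow> d (\<Union>m. F' m)"
      unfolding d_def by (rule sm_incseq[OF sm F'm])
    have "\<gamma> - 2 / 2 ^ m + 0 \<le> d (F' m)" for m
    proof (rule LIMSEQ_le)
      have *: "decseq (\<lambda>n. F m (n + m))"
        by (auto simp: decseq_def F_def)
      have "(\<lambda>n. d (F m (n + m))) \<longlonglongrightarrow> d (F' m)"
        unfolding d_def F'_eq by (rule sm_decseq[OF sm Fm *])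
      then show "(\<lambda>n. d (F m n)) \<longlonglongrightarrow> d (F' m)"
        by (rule LIMSEQ_offset[where k=m])
      show "(\<lambda>n. \<gamma> - 2 / 2 ^ m + 1 / 2 ^ n) \<longlonglongrightarrow> \<gamma> - 2 / 2 ^ m + 0"
        by (intro tendsto_add LIMSEQ_divide_realpow_zero tendsto_const) auto
      show "\<exists>N. \<forall>n\<ge>N. \<gamma> - 2 / 2 ^ m + 1 / 2 ^ n \<le> d (F m n)"
        using 1[of m] by (intro exI[of _ m]) auto
    qed
    then show "\<exists>N. \<forall>n\<ge>N. \<gamma> - 2 / 2 ^ n \<le> d (F' n)"
      by auto
  qed
  have Um: "(\<Union>m. F' m) \<in> sets borel" using F'm by auto
  show ?thesis
  proof (intro bexI[of _ "\<Union>m. F' m"] conjI ballI impI)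
    fix X assume Xm: "X \<in> sets borel" and X: "X \<subseteq> (\<Union>m. F' m)"
    have "d (\<Union>m. F' m) = d ((\<Union>m. F' m) - X) + d ((\<Union>m. F' m) \<inter> X)" by (rule spl[OF Um Xm])
    moreover have "(\<Union>m. F' m) \<inter> X = X" using X by auto
    moreover have "d ((\<Union>m. F' m) - X) \<le> \<gamma>" using Um Xm by auto
    ultimately show "0 \<le> \<mu> X"
      using \<gamma>_le by (auto simp: d_def)
  next
    fix X assume Xm: "X \<in> sets borel" and X: "X \<inter> (\<Union>m. F' m) = {}"
    have "d ((\<Union>m. F' m) \<union> X) = d (\<Union>m. F' m) + d (X - (\<Union>m. F' m))" by (rule add[OF Um Xm])
    moreover have "X - (\<Union>m. F' m) = X" using X by auto
    moreover have "d ((\<Union>m. F' m) \<union> X) \<le> \<gamma>" using Um Xm by auto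
    ultimately show "\<mu> X \<le> 0"
      using \<gamma>_le by (auto simp: d_def)
  qed (rule Um)
qed



lemma tvar_eq:
  assumes sm: "signed_measure \<mu>" and H: "H \<in> sets borel"
    and Hp: "\<forall>X\<in>sets borel. X \<subseteq> H \<longrightarrow> 0 \<le> \<mu> X"
    and Hn: "\<forall>X\<in>sets borel. X \<inter> H = {} \<longrightarrow> \<mu> X \<le> 0"
    and A: "A \<in> sets borel"
  shows "tvar \<mu> A = \<mu> (A \<inter> H) - \<mu> (A - H)"
proof -
  have Hc: "- H \<in> sets borel" using H by (metis Compl_eq_Diff_UNIV sets.compl_sets space_borel)
  define Ps where "Ps = {P. finite P \<and> P \<subseteq> sets borel \<and> disjoint P \<and> \<Union>P = A}"
  have bnd: "(\<Sum>B\<in>P. \<bar>\<mu> B\<bar>) \<le> \<mu> (A \<inter> H) - \<mu> (A - H)" if "P \<in> Ps" for P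
  proof -
    have P: "finite P" "P \<subseteq> sets borel" "disjoint P" "\<Union>P = A" using that by (auto simp: Ps_def)
    have "\<bar>\<mu> B\<bar> \<le> \<mu> (B \<inter> H) - \<mu> (B \<inter> - H)" if "B \<in> P" for B
    proof -
      have B: "B \<in> sets borel" using that P by auto
      have "\<mu> B = \<mu> (B \<inter> H) + \<mu> (B - H)" by (rule sm_split[OF sm B H])
      moreover have "B - H = B \<inter> - H" by auto
      ultimately have e: "\<mu> B = \<mu> (B \<inter> H) + \<mu> (B \<inter> - H)" by simp
      moreover have "0 \<le> \<mu> (B \<inter> H)" using Hp B H by auto
      moreover have "\<mu> (B \<inter> - H) \<le> 0" using Hn B H by (auto intro: sets.Int sets.compl_sets)
      ultimately show ?thesis by (simp add: abs_le_iff)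
    qed
    then have "(\<Sum>B\<in>P. \<bar>\<mu> B\<bar>) \<le> (\<Sum>B\<in>P. \<mu> (B \<inter> H) - \<mu> (B \<inter> - H))" by (rule sum_mono)
    also have "\<dots> = (\<Sum>B\<in>P. \<mu> (B \<inter> H)) - (\<Sum>B\<in>P. \<mu> (B \<inter> - H))" by (simp add: sum_subtractf)
    also have "\<dots> = \<mu> (A \<inter> H) - \<mu> (A \<inter> - H)"
      using sm_finite_union[OF sm H P(1-3)] sm_finite_union[OF sm Hc P(1-3)] P(4)
      by simp
    also have "A \<inter> - H = A - H" by auto
    finally show ?thesis .
  qed
  define P0 where "P0 = {A \<inter> H, A - H}"
  have P0: "P0 \<in> Ps" using A H by (auto simp: Ps_def P0_def disjoint_def)
  have s0: "(\<Sum>B\<in>P0. \<bar>\<mu> B\<bar>) = \<mu> (A \<inter> H) - \<mu> (A - H)"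
  proof (cases "A \<inter> H = A - H")
    case True
    then have "A \<inter> H = {}" "A - H = {}" by auto
    then have "P0 = {{}}" by (simp add: P0_def)
    then show ?thesis unfolding \<open>A \<inter> H = {}\<close> \<open>A - H = {}\<close> by (simp add: sm_empty[OF sm])
  next
    case False
    have "0 \<le> \<mu> (A \<inter> H)" using Hp A H by auto
    moreover have "\<mu> (A - H) \<le> 0" using Hn A H by auto
    ultimately show ?thesis using False by (simp add: P0_def)
  qed
  have "tvar \<mu> A = Sup ((\<lambda>P. \<Sum>B\<in>P. \<bar>\<mu> B\<bar>) ` Ps)" by (simp add: tvar_def Ps_def)
  also have "\<dots> = \<mu> (A \<inter> H) - \<mu> (A - H)"
    by (rule cSup_eq_maximum) (use P0 s0 bnd in \<open>force+\<close>)
  finally show ?thesis .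
qed

lemma sigma_borel: "sigma_algebra UNIV (sets borel)"
  using sets.sigma_algebra_axioms[of borel] by simp

lemma jordan:
  assumes sm: "signed_measure \<mu>"
  shows "finite_measure (pos_part \<mu>) \<and> finite_measure (neg_part \<mu>) \<and>
    sets (pos_part \<mu>) = sets borel \<and> sets (neg_part \<mu>) = sets borel \<and>
    (\<forall>A\<in>sets borel. measure (pos_part \<mu>) A - measure (neg_part \<mu>) A = \<mu> A)"
proof -
  obtain H where H: "H \<in> sets borel" and Hp: "\<forall>X\<in>sets borel. X \<subseteq> H \<longrightarrow> 0 \<le> \<mu> X"
    and Hn: "\<forall>X\<in>sets borel. X \<inter> H = {} \<longrightarrow> \<mu> X \<le> 0"
    using sm_hahn[OF sm] by blast
  note tv = tvar_eq[OF sm H Hp Hn]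
  have pv: "(tvar \<mu> A + \<mu> A) / 2 = \<mu> (A \<inter> H)" if "A \<in> sets borel" for A
    using tv[OF that] sm_split[OF sm that H] by simp
  have nv: "(tvar \<mu> A - \<mu> A) / 2 = - \<mu> (A - H)" if "A \<in> sets borel" for A
    using tv[OF that] sm_split[OF sm that H] by simp
  have pnn: "0 \<le> \<mu> (A \<inter> H)" if "A \<in> sets borel" for A using Hp that H by auto
  have nnn: "0 \<le> - \<mu> (A - H)" if "A \<in> sets borel" for A using Hn that H by auto
  have subs: "sets borel \<subseteq> Pow UNIV" by simp
  have sp: "sets (pos_part \<mu>) = sets borel"
    unfolding pos_part_def sets_measure_of[OF subs] using sigma_algebra.sigma_sets_eq[OF sigma_borel] .
  have sn: "sets (neg_part \<mu>) = sets borel"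
    unfolding neg_part_def sets_measure_of[OF subs] using sigma_algebra.sigma_sets_eq[OF sigma_borel] .
  have ep: "emeasure (pos_part \<mu>) A = ennreal (\<mu> (A \<inter> H))" if A: "A \<in> sets borel" for A
  proof -
    have "emeasure (pos_part \<mu>) A = ennreal ((tvar \<mu> A + \<mu> A) / 2)"
      unfolding pos_part_def
    proof (rule emeasure_measure_of_sigma[OF sigma_borel _ _ A])
      show "positive (sets borel) (\<lambda>A. ennreal ((tvar \<mu> A + \<mu> A) / 2))"
        unfolding positive_def using pv[of "{}"] sm_empty[OF sm] by simp
      show "countably_additive (sets borel) (\<lambda>A. ennreal ((tvar \<mu> A + \<mu> A) / 2))"
        unfolding countably_additive_def
      proof (intro allI impI)
        fix F :: "nat \<Rightarrow> 'a set" assume F: "range F \<subseteq> sets borel" "disjoint_family F" "(\<Union>i. F i) \<in> sets borel"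
        have F': "\<And>i. F i \<inter> H \<in> sets borel" using F H by auto
        have "disjoint_family (\<lambda>i. F i \<inter> H)" using F(2) by (auto simp: disjoint_family_on_def)
        then have "(\<lambda>i. \<mu> (F i \<inter> H)) sums \<mu> (\<Union>i. F i \<inter> H)" by (rule sm_sums[OF sm F'])
        moreover have "(\<Union>i. F i \<inter> H) = (\<Union>i. F i) \<inter> H" by auto
        ultimately have "(\<Sum>i. ennreal (\<mu> (F i \<inter> H))) = ennreal (\<mu> ((\<Union>i. F i) \<inter> H))"
          using pnn F by (intro suminf_ennreal_eq) auto
        then show "(\<Sum>i. ennreal ((tvar \<mu> (F i) + \<mu> (F i)) / 2)) = ennreal ((tvar \<mu> (\<Union>i. F i) + \<mu> (\<Union>i. F i)) / 2)"
          using pv F by auto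
      qed
    qed
    then show ?thesis using pv[OF A] by simp
  qed
  have en: "emeasure (neg_part \<mu>) A = ennreal (- \<mu> (A - H))" if A: "A \<in> sets borel" for A
  proof -
    have "emeasure (neg_part \<mu>) A = ennreal ((tvar \<mu> A - \<mu> A) / 2)"
      unfolding neg_part_def
    proof (rule emeasure_measure_of_sigma[OF sigma_borel _ _ A])
      show "positive (sets borel) (\<lambda>A. ennreal ((tvar \<mu> A - \<mu> A) / 2))"
        unfolding positive_def using nv[of "{}"] sm_empty[OF sm] by simp
      show "countably_additive (sets borel) (\<lambda>A. ennreal ((tvar \<mu> A - \<mu> A) / 2))"
        unfolding countably_additive_def
      proof (intro allI impI)
        fix F :: "nat \<Rightarrow> 'a set" assume F: "range F \<subseteq> sets borel" "disjoint_family F" "(\<Union>i. F i) \<in> sets borel"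
        have F': "\<And>i. F i - H \<in> sets borel" using F H by auto
        have "disjoint_family (\<lambda>i. F i - H)" using F(2) by (auto simp: disjoint_family_on_def)
        then have "(\<lambda>i. \<mu> (F i - H)) sums \<mu> (\<Union>i. F i - H)" by (rule sm_sums[OF sm F'])
        then have "(\<lambda>i. - \<mu> (F i - H)) sums (- \<mu> (\<Union>i. F i - H))" by (rule sums_minus)
        moreover have "(\<Union>i. F i - H) = (\<Union>i. F i) - H" by auto
        ultimately have "(\<Sum>i. ennreal (- \<mu> (F i - H))) = ennreal (- \<mu> ((\<Union>i. F i) - H))"
          using nnn F by (intro suminf_ennreal_eq) auto
        then show "(\<Sum>i. ennreal ((tvar \<mu> (F i) - \<mu> (F i)) / 2)) = ennreal ((tvar \<mu> (\<Union>i. F i) - \<mu> (\<Union>i. F i)) / 2)"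
          using nv F by auto
      qed
    qed
    then show ?thesis using nv[OF A] by simp
  qed
  have fp: "finite_measure (pos_part \<mu>)"
    by (rule finite_measureI) (simp add: ep sets.top[of borel, simplified] sp[symmetric] sets.top)
  have fn: "finite_measure (neg_part \<mu>)"
    by (rule finite_measureI) (simp add: en sets.top[of borel, simplified] sn[symmetric] sets.top)
  have "measure (pos_part \<mu>) A - measure (neg_part \<mu>) A = \<mu> A" if A: "A \<in> sets borel" for A
    using ep[OF A] en[OF A] pnn[OF A] nnn[OF A] sm_split[OF sm A H] by (simp add: measure_def)
  then show ?thesis using fp fn sp sn by blast
qed



lemma int_comb_zero:
  fixes M :: "'i \<Rightarrow> 'a::topological_space measure" and f :: "'a \<Rightarrow> real"
  assumes I: "finite I" and M: "\<And>i. i \<in> I \<Longrightarrow> finite_measure (M i)"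
    and Ms: "\<And>i. i \<in> I \<Longrightarrow> sets (M i) = sets borel"
    and c0: "\<And>A. A \<in> sets borel \<Longrightarrow> (\<Sum>i\<in>I. c i * measure (M i) A) = 0"
    and fm: "f \<in> borel_measurable borel" and fB: "\<And>x. \<bar>f x\<bar> \<le> B"
  shows "(\<Sum>i\<in>I. c i * integral\<^sup>L (M i) f) = 0"
proof -
  have sp: "space (M i) = UNIV" if "i \<in> I" for i using Ms[OF that] sets_eq_imp_space_eq by fastforce
  have fmi: "f \<in> borel_measurable (M i)" if "i \<in> I" for i
    using fm measurable_cong_sets[OF Ms[OF that] refl] by blast
  define C where "C = (\<Sum>i\<in>I. \<bar>c i\<bar> * measure (M i) UNIV)"
  have key: "\<bar>\<Sum>i\<in>I. c i * integral\<^sup>L (M i) f\<bar> \<le> C / real n" if n: "n > 0" for n :: nat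
  proof -
    define r where "r = real n"
    have r: "r > 0" using n by (simp add: r_def)
    define s where "s x = real_of_int \<lfloor>r * f x\<rfloor> / r" for x
    define N where "N = \<lceil>r * B\<rceil> + 1"
    define K where "K = {-N..N}"
    define Ak where "Ak k = {x. \<lfloor>r * f x\<rfloor> = k}" for k
    have Ak: "Ak k \<in> sets borel" for k unfolding Ak_def using fm by measurable
    have inK: "\<lfloor>r * f x\<rfloor> \<in> K" for x
    proof -
      have "\<bar>r * f x\<bar> \<le> r * B" using fB[of x] r by (simp add: abs_mult mult_left_mono)
      then have "- (r * B) \<le> r * f x" "r * f x \<le> r * B" by (auto simp: abs_le_iff)
      then have "- N \<le> \<lfloor>r * f x\<rfloor>" "\<lfloor>r * f x\<rfloor> \<le> N" unfolding N_def
        by (smt (verit, ccfv_SIG) ceiling_correct floor_le_ceiling le_floor_iff of_int_minus of_int_add of_int_1 floor_le_iff ceiling_le_iff)+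
      then show ?thesis by (simp add: K_def)
    qed
    have s_sum: "s x = (\<Sum>k\<in>K. (real_of_int k / r) * indicator (Ak k) x)" for x
    proof -
      have "(\<Sum>k\<in>K. (real_of_int k / r) * indicator (Ak k) x) = (\<Sum>k\<in>K. if k = \<lfloor>r * f x\<rfloor> then real_of_int k / r else 0)"
        by (rule sum.cong) (auto simp: Ak_def indicator_def)
      also have "\<dots> = real_of_int \<lfloor>r * f x\<rfloor> / r" using inK[of x] by (simp add: K_def)
      finally show ?thesis by (simp add: s_def)
    qed
    have fin: "finite K" by (simp add: K_def)
    have ints: "integral\<^sup>L (M i) s = (\<Sum>k\<in>K. (real_of_int k / r) * measure (M i) (Ak k))" if i: "i \<in> I" for i
    proof -
      interpret finite_measure "M i" using M[OF i] .
      have "integral\<^sup>L (M i) s = integral\<^sup>L (M i) (\<lambda>x. \<Sum>k\<in>K. (real_of_int k / r) * indicator (Ak k) x)"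
        by (rule arg_cong[where f="integral\<^sup>L (M i)"]) (intro ext s_sum)
      also have "\<dots> = (\<Sum>k\<in>K. integral\<^sup>L (M i) (\<lambda>x. (real_of_int k / r) * indicator (Ak k) x))"
        by (rule Bochner_Integration.integral_sum[where f="\<lambda>k x. real_of_int k / r * indicator (Ak k) x"])
           (intro integrable_mult_right integrable_real_indicator, auto simp: Ms[OF i] Ak less_top[symmetric])
      also have "\<dots> = (\<Sum>k\<in>K. (real_of_int k / r) * measure (M i) (Ak k))"
        by (simp add: sp[OF i])
      finally show ?thesis .
    qed
    have zero: "(\<Sum>i\<in>I. c i * integral\<^sup>L (M i) s) = 0"
    proof -
      have "(\<Sum>i\<in>I. c i * integral\<^sup>L (M i) s) = (\<Sum>i\<in>I. \<Sum>k\<in>K. (real_of_int k / r) * (c i * measure (M i) (Ak k)))"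
        by (rule sum.cong) (auto simp: ints sum_distrib_left mult_ac)
      also have "\<dots> = (\<Sum>k\<in>K. (real_of_int k / r) * (\<Sum>i\<in>I. c i * measure (M i) (Ak k)))"
        by (subst sum.swap) (simp add: sum_distrib_left)
      also have "\<dots> = 0" using c0[OF Ak] by simp
      finally show ?thesis .
    qed
    have sfs: "s x \<le> f x \<and> f x - s x \<le> 1 / r" for x
    proof -
      have a: "real_of_int \<lfloor>r * f x\<rfloor> \<le> r * f x" and b: "r * f x \<le> real_of_int \<lfloor>r * f x\<rfloor> + 1" by linarith+
      have "s x \<le> f x" using a r unfolding s_def by (simp add: divide_le_eq mult.commute)
      moreover have "f x - s x = (r * f x - real_of_int \<lfloor>r * f x\<rfloor>) / r" using r by (simp add: s_def field_simps)
      moreover have "(r * f x - real_of_int \<lfloor>r * f x\<rfloor>) / r \<le> 1 / r" using r by (intro divide_right_mono) (use b in linarith, simp)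
      ultimately show ?thesis by simp
    qed
    have sm: "s \<in> borel_measurable borel" unfolding s_def using fm by measurable
    have r1: "1 / r \<le> 1" using n by (simp add: r_def)
    have bnd: "\<bar>integral\<^sup>L (M i) f - integral\<^sup>L (M i) s\<bar> \<le> measure (M i) UNIV / r" if i: "i \<in> I" for i
    proof -
      interpret finite_measure "M i" using M[OF i] .
      have sB: "\<bar>s x\<bar> \<le> B + 1" for x
      proof -
        have "s x \<le> f x" "f x - s x \<le> 1 / r" using sfs[of x] by auto
        then show ?thesis using fB[of x] r1 by (simp add: abs_le_iff)
      qed
      have smi: "s \<in> borel_measurable (M i)" using sm measurable_cong_sets[OF Ms[OF i] refl] by blast
      have if_: "integrable (M i) f" using fB fmi[OF i] by (intro integrable_const_bound[where B=B]) auto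
      have is_: "integrable (M i) s" using sB smi
        by (intro integrable_const_bound[where B="B+1"]) auto
      have e1: "integral\<^sup>L (M i) f - integral\<^sup>L (M i) s = integral\<^sup>L (M i) (\<lambda>x. f x - s x)"
        using if_ is_ by simp
      have e2: "integral\<^sup>L (M i) (\<lambda>x. f x - s x) \<le> integral\<^sup>L (M i) (\<lambda>x. 1 / r)"
        using if_ is_ sfs by (intro integral_mono) auto
      have e3: "integral\<^sup>L (M i) (\<lambda>x. 1 / r) = measure (M i) UNIV / r"
        by (simp add: sp[OF i])
      have e4: "0 \<le> integral\<^sup>L (M i) (\<lambda>x. f x - s x)"
        using sfs by (intro integral_nonneg_AE) auto
      show ?thesis using e1 e2 e3 e4 by linarith
    qed
    have "\<bar>\<Sum>i\<in>I. c i * integral\<^sup>L (M i) f\<bar> = \<bar>\<Sum>i\<in>I. c i * (integral\<^sup>L (M i) f - integral\<^sup>L (M i) s)\<bar>"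
      using zero by (simp add: right_diff_distrib sum_subtractf)
    also have "\<dots> \<le> (\<Sum>i\<in>I. \<bar>c i * (integral\<^sup>L (M i) f - integral\<^sup>L (M i) s)\<bar>)" by (rule sum_abs)
    also have "\<dots> \<le> (\<Sum>i\<in>I. \<bar>c i\<bar> * (measure (M i) UNIV / r))"
    proof (rule sum_mono)
      fix i assume i: "i \<in> I"
      have "\<bar>c i * (integral\<^sup>L (M i) f - integral\<^sup>L (M i) s)\<bar> = \<bar>c i\<bar> * \<bar>integral\<^sup>L (M i) f - integral\<^sup>L (M i) s\<bar>"
        by (simp add: abs_mult)
      also have "\<dots> \<le> \<bar>c i\<bar> * (measure (M i) UNIV / r)" by (rule mult_left_mono[OF bnd[OF i]]) simp
      finally show "\<bar>c i * (integral\<^sup>L (M i) f - integral\<^sup>L (M i) s)\<bar> \<le> \<bar>c i\<bar> * (measure (M i) UNIV / r)" .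
    qed
    also have "\<dots> = C / r" by (simp add: C_def sum_divide_distrib)
    finally show ?thesis by (simp add: r_def)
  qed
  show ?thesis
  proof (rule ccontr)
    assume ne: "(\<Sum>i\<in>I. c i * integral\<^sup>L (M i) f) \<noteq> 0"
    define X where "X = \<bar>\<Sum>i\<in>I. c i * integral\<^sup>L (M i) f\<bar>"
    have X: "X > 0" using ne by (simp add: X_def)
    obtain n :: nat where n: "n > C / X" using reals_Archimedean2 by blast
    have C0: "C \<ge> 0" unfolding C_def by (intro sum_nonneg mult_nonneg_nonneg) auto
    then have n0: "n > 0" using n X by (metis divide_nonneg_pos gr0I leD of_nat_0)
    have "X \<le> C / real n" using key[OF n0] by (simp add: X_def)
    then have "X * real n \<le> C" using n0 by (simp add: field_simps)
    moreover have "C < X * real n" using n X by (simp add: field_simps)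
    ultimately show False by linarith
  qed
qed



lemma sm_comb:
  assumes "signed_measure \<mu>1" "signed_measure \<mu>2"
  shows "signed_measure (\<lambda>A. a * \<mu>1 A + b * \<mu>2 A)"
  using assms unfolding signed_measure_def
  by (auto intro!: sums_add sums_mult)

definition bmf :: "('a::topological_space \<Rightarrow> real) \<Rightarrow> bool" where
  "bmf f \<longleftrightarrow> f \<in> borel_measurable borel \<and> (\<exists>B. \<forall>x. \<bar>f x\<bar> \<le> B)"

lemma bmf_cont:
  assumes "compact (UNIV :: 'a::topological_space set)" "continuous_on UNIV (f :: 'a \<Rightarrow> real)"
  shows "bmf f"
proof -
  have "compact (f ` UNIV)" by (rule compact_continuous_image[OF assms(2,1)])
  then obtain B where "\<forall>y\<in>f ` UNIV. norm y \<le> B" using compact_imp_bounded bounded_iff by metis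
  then show ?thesis unfolding bmf_def using borel_measurable_continuous_onI[OF assms(2)] by auto
qed

lemma sint_lin:
  assumes s1: "signed_measure \<mu>1" and s2: "signed_measure \<mu>2" and f: "bmf f"
  shows "sint (\<lambda>A. a * \<mu>1 A + b * \<mu>2 A) f = a * sint \<mu>1 f + b * sint \<mu>2 f"
proof -
  define \<nu> where "\<nu> = (\<lambda>A. a * \<mu>1 A + b * \<mu>2 A)"
  have s0: "signed_measure \<nu>" unfolding \<nu>_def by (rule sm_comb[OF s1 s2])
  note j0 = jordan[OF s0] and j1 = jordan[OF s1] and j2 = jordan[OF s2]
  define M where "M i = [pos_part \<nu>, neg_part \<nu>, pos_part \<mu>1, neg_part \<mu>1, pos_part \<mu>2, neg_part \<mu>2] ! i" for i
  define c where "c i = [1, -1, -a, a, -b, b] ! i" for i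
  obtain B where fm: "f \<in> borel_measurable borel" and fB: "\<And>x. \<bar>f x\<bar> \<le> B" using f unfolding bmf_def by blast
  have I: "{..<6::nat} = {0,1,2,3,4,5}" by auto
  have "(\<Sum>i\<in>{..<6::nat}. c i * integral\<^sup>L (M i) f) = 0"
  proof (rule int_comb_zero[OF _ _ _ _ fm fB])
    show "\<And>i. i \<in> {..<6} \<Longrightarrow> finite_measure (M i)" unfolding I M_def using j0 j1 j2 by auto
    show "\<And>i. i \<in> {..<6} \<Longrightarrow> sets (M i) = sets borel" unfolding I M_def using j0 j1 j2 by auto
    fix A :: "'a set" assume A: "A \<in> sets borel"
    have "\<nu> A = a * \<mu>1 A + b * \<mu>2 A" by (simp add: \<nu>_def)
    then show "(\<Sum>i\<in>{..<6}. c i * measure (M i) A) = 0"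
      unfolding I M_def c_def using j0 j1 j2 A by (simp add: algebra_simps)
  qed simp
  then show ?thesis unfolding I M_def c_def sint_def \<nu>_def[symmetric] by (simp add: algebra_simps)
qed

lemma sint_fun_lin:
  assumes sm: "signed_measure \<mu>" and f: "bmf f" and g: "bmf g"
  shows "sint \<mu> (\<lambda>x. a * f x + b * g x) = a * sint \<mu> f + b * sint \<mu> g"
proof -
  note j = jordan[OF sm]
  obtain B1 where fm: "f \<in> borel_measurable borel" and fB: "\<And>x. \<bar>f x\<bar> \<le> B1" using f unfolding bmf_def by blast
  obtain B2 where gm: "g \<in> borel_measurable borel" and gB: "\<And>x. \<bar>g x\<bar> \<le> B2" using g unfolding bmf_def by blast
  have int: "integrable M f \<and> integrable M g" if "finite_measure M" "sets M = sets borel" for M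
  proof -
    interpret finite_measure M by fact
    have "f \<in> borel_measurable M" "g \<in> borel_measurable M"
      using fm gm measurable_cong_sets[OF that(2) refl] by blast+
    then show ?thesis using fB gB
      by (intro conjI integrable_const_bound[where B=B1] integrable_const_bound[where B=B2]) auto
  qed
  have "integral\<^sup>L M (\<lambda>x. a * f x + b * g x) = a * integral\<^sup>L M f + b * integral\<^sup>L M g"
    if "finite_measure M" "sets M = sets borel" for M
    using int[OF that] by simp
  then show ?thesis unfolding sint_def using j by (simp add: algebra_simps)
qed

lemma bmf_lin: "bmf f \<Longrightarrow> bmf g \<Longrightarrow> bmf (\<lambda>x. a * f x + b * g x)"
proof -
  assume f: "bmf f" and g: "bmf g"
  obtain B1 where fm: "f \<in> borel_measurable borel" and fB: "\<And>x. \<bar>f x\<bar> \<le> B1" using f unfolding bmf_def by blast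
  obtain B2 where gm: "g \<in> borel_measurable borel" and gB: "\<And>x. \<bar>g x\<bar> \<le> B2" using g unfolding bmf_def by blast
  have "\<bar>a * f x + b * g x\<bar> \<le> \<bar>a\<bar> * B1 + \<bar>b\<bar> * B2" for x
  proof -
    have "\<bar>a * f x + b * g x\<bar> \<le> \<bar>a\<bar> * \<bar>f x\<bar> + \<bar>b\<bar> * \<bar>g x\<bar>" by (metis abs_mult abs_triangle_ineq)
    also have "\<dots> \<le> \<bar>a\<bar> * B1 + \<bar>b\<bar> * B2" using fB gB by (intro add_mono mult_left_mono) auto
    finally show ?thesis .
  qed
  then show ?thesis unfolding bmf_def using fm gm by auto
qed

lemma bmf_const: "bmf (\<lambda>x. c)"
  unfolding bmf_def by auto

lemma sint_sum:
  assumes sm: "signed_measure \<mu>" and J: "finite J" and g: "\<And>j. j \<in> J \<Longrightarrow> bmf (g j)"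
  shows "bmf (\<lambda>x. \<Sum>j\<in>J. a j * g j x) \<and> sint \<mu> (\<lambda>x. \<Sum>j\<in>J. a j * g j x) = (\<Sum>j\<in>J. a j * sint \<mu> (g j))"
  using J g
proof (induction J rule: finite_induct)
  case empty
  have "sint \<mu> (\<lambda>x. 0) = 0" unfolding sint_def by simp
  then show ?case by (simp add: bmf_const)
next
  case (insert j J)
  have gj: "bmf (g j)" using insert by auto
  have IH: "bmf (\<lambda>x. \<Sum>j\<in>J. a j * g j x)" "sint \<mu> (\<lambda>x. \<Sum>j\<in>J. a j * g j x) = (\<Sum>j\<in>J. a j * sint \<mu> (g j))"
    using insert by auto
  have e: "(\<lambda>x. \<Sum>j\<in>insert j J. a j * g j x) = (\<lambda>x. a j * g j x + 1 * (\<Sum>j\<in>J. a j * g j x))"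
    using insert by auto
  show ?case unfolding e using sint_fun_lin[OF sm gj IH(1), of "a j" 1] IH bmf_lin[OF gj IH(1), of "a j" 1] insert by simp
qed



lemma quad_nonpos:
  fixes A C :: real
  assumes h: "\<And>t. 0 < t \<Longrightarrow> t \<le> 1 \<Longrightarrow> 0 \<le> - 2 * t * A + t\<^sup>2 * C" and C: "0 \<le> C"
  shows "A \<le> 0"
proof (rule ccontr)
  assume "\<not> A \<le> 0" then have A: "A > 0" by simp
  define t where "t = min 1 (A / (C + 1))"
  have t0: "0 < t" "t \<le> 1" using A C by (auto simp: t_def)
  have tC: "t * C < 2 * A"
  proof -
    have "t * C \<le> A / (C + 1) * C" using C by (intro mult_right_mono) (auto simp: t_def)
    also have "\<dots> < A" using A C by (simp add: field_simps)
    finally show ?thesis using A by linarith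
  qed
  have "0 \<le> t * (- 2 * A + t * C)" using h[OF t0] by (simp add: power2_eq_square algebra_simps)
  moreover have "t * (- 2 * A + t * C) < 0" using t0 tC by (intro mult_pos_neg) auto
  ultimately show False by linarith
qed

lemma sep_finite:
  fixes K :: "('i \<Rightarrow> real) set" and p :: "'i \<Rightarrow> real"
  assumes I: "finite I"
    and cone: "\<And>x y a b. x \<in> K \<Longrightarrow> y \<in> K \<Longrightarrow> 0 \<le> a \<Longrightarrow> 0 \<le> b \<Longrightarrow> (\<lambda>i. a * x i + b * y i) \<in> K"
    and ne: "K \<noteq> {}"
    and far: "\<And>k. k \<in> K \<Longrightarrow> d \<le> (\<Sum>i\<in>I. (p i - k i)\<^sup>2)" and d: "0 < d"
  shows "\<exists>u. (\<forall>k\<in>K. 0 \<le> (\<Sum>i\<in>I. u i * k i)) \<and> (\<Sum>i\<in>I. u i * p i) < 0"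
proof -
  define D where "D k = (\<Sum>i\<in>I. (p i - k i)\<^sup>2)" for k :: "'i \<Rightarrow> real"
  define \<delta> where "\<delta> = Inf (D ` K)"
  have bb: "bdd_below (D ` K)" using far by (auto simp: D_def bdd_below_def)
  have Dge: "\<delta> \<le> D k" if "k \<in> K" for k unfolding \<delta>_def using bb that by (intro cInf_lower) auto
  have \<delta>d: "d \<le> \<delta>" unfolding \<delta>_def using ne far by (intro cInf_greatest) (auto simp: D_def)
  have "\<exists>k\<in>K. D k < \<delta> + 1 / Suc j" for j
  proof -
    have "Inf (D ` K) < \<delta> + 1 / Suc j" by (simp add: \<delta>_def)
    then show ?thesis using cInf_less_iff[of "D ` K"] ne bb by auto
  qed
  then obtain kk where kkK: "\<And>j. kk j \<in> K" and kkD: "\<And>j. D (kk j) < \<delta> + 1 / Suc j" by metis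
  have sq_bound: "\<bar>x\<bar> \<le> M" if "x\<^sup>2 \<le> M" "1 \<le> M" for x M :: real
  proof (rule ccontr)
    assume "\<not> \<bar>x\<bar> \<le> M"
    then have "M * M < \<bar>x\<bar> * \<bar>x\<bar>" using that by (intro mult_strict_mono) auto
    moreover have "\<bar>x\<bar> * \<bar>x\<bar> = x\<^sup>2" by (simp add: power2_eq_square)
    moreover have "M \<le> M * M" using that(2) by (metis mult_le_cancel_left1 order_trans zero_le_one linorder_not_le less_le_trans)
    ultimately show False using that(1) by linarith
  qed
  have bnd: "\<bar>kk j i\<bar> \<le> \<bar>p i\<bar> + (\<delta> + 1)" if i: "i \<in> I" for i j
  proof -
    have "(p i - kk j i)\<^sup>2 \<le> D (kk j)" unfolding D_def using I i
      by (intro member_le_sum) auto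
    also have "\<dots> \<le> \<delta> + 1"
    proof -
      have "1 / real (Suc j) \<le> 1" by simp
      then show ?thesis using kkD[of j] by linarith
    qed
    finally have "\<bar>p i - kk j i\<bar> \<le> \<delta> + 1" using \<delta>d d by (intro sq_bound) auto
    then show ?thesis by linarith
  qed
  have "\<forall>\<delta>'\<subseteq>I. \<exists>l::'i \<Rightarrow> real. \<exists>r::nat\<Rightarrow>nat.
    strict_mono r \<and> (\<forall>\<epsilon>>0. eventually (\<lambda>n. \<forall>i\<in>\<delta>'. dist (kk (r n) i) (l i) < \<epsilon>) sequentially)"
  proof (rule compact_lemma_general[where proj="\<lambda>x k. x k" and unproj=id])
    fix k assume k: "k \<in> I"
    show "bounded ((\<lambda>x. x k) ` range kk)"
      unfolding bounded_real using bnd[OF k] by auto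
  qed (use I in auto)
  then obtain z r where r: "strict_mono r"
    and conv: "\<forall>\<epsilon>>0. eventually (\<lambda>n. \<forall>i\<in>I. dist (kk (r n) i) (z i) < \<epsilon>) sequentially" by blast
  have zc: "(\<lambda>n. kk (r n) i) \<longlonglongrightarrow> z i" if "i \<in> I" for i
    unfolding tendsto_iff
  proof (intro allI impI)
    fix e :: real assume e: "0 < e"
    show "\<forall>\<^sub>F n in sequentially. dist (kk (r n) i) (z i) < e"
    proof -
      have "\<forall>\<^sub>F n in sequentially. \<forall>i\<in>I. dist (kk (r n) i) (z i) < e" using conv e by blast
      then show ?thesis by (rule eventually_mono) (use that in blast)
    qed
  qed
  have Dlim: "(\<lambda>n. D (\<lambda>i. a * kk (r n) i + b * k i)) \<longlonglongrightarrow> D (\<lambda>i. a * z i + b * k i)" for a b k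
    unfolding D_def by (intro tendsto_sum tendsto_intros zc)
  have Q: "\<delta> \<le> D (\<lambda>i. a * z i + b * k i)" if "k \<in> K" "0 \<le> a" "0 \<le> b" for a b k
    using Dlim[of a b k] by (rule LIMSEQ_le_const) (use Dge cone kkK that in blast)
  obtain k0 where k0: "k0 \<in> K" using ne by blast
  have Dz: "D z \<le> \<delta>"
  proof (rule LIMSEQ_le[where X="\<lambda>n. D (\<lambda>i. 1 * kk (r n) i + 0 * k0 i)"])
    show "(\<lambda>n. D (\<lambda>i. 1 * kk (r n) i + 0 * k0 i)) \<longlonglongrightarrow> D z" using Dlim[of 1 0 k0] by simp
    show "(\<lambda>n. \<delta> + 1 / Suc n) \<longlonglongrightarrow> \<delta>"
      using tendsto_add[OF tendsto_const[of \<delta>] LIMSEQ_Suc[OF lim_inverse_n']] by (simp add: inverse_eq_divide)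
    have "D (kk (r n)) \<le> \<delta> + 1 / Suc n" for n
    proof -
      have "n \<le> r n" using seq_suble[OF r] by auto
      then have "1 / real (Suc (r n)) \<le> 1 / Suc n" by (intro divide_left_mono) auto
      then show ?thesis using kkD[of "r n"] by linarith
    qed
    then show "\<exists>N. \<forall>n\<ge>N. D (\<lambda>i. 1 * kk (r n) i + 0 * k0 i) \<le> \<delta> + 1 / Suc n" by auto
  qed
  have Dz2: "\<delta> \<le> D z" using Q[OF k0, of 1 0] by simp
  define w where "w i = p i - z i" for i
  define WW where "WW = (\<Sum>i\<in>I. w i * w i)"
  define WZ where "WZ = (\<Sum>i\<in>I. w i * z i)"
  define ZZ where "ZZ = (\<Sum>i\<in>I. z i * z i)"
  have DzW: "D z = WW" by (simp add: D_def WW_def w_def power2_eq_square)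
  have exp: "D (\<lambda>i. a * z i + b * k i) = (\<Sum>i\<in>I. (w i - (a - 1) * z i - b * k i)\<^sup>2)" for a b k
    unfolding D_def w_def by (intro sum.cong) (auto simp: algebra_simps)
  have exp2: "(\<Sum>i\<in>I. (w i - s * x i)\<^sup>2) = WW - 2 * s * (\<Sum>i\<in>I. w i * x i) + s\<^sup>2 * (\<Sum>i\<in>I. x i * x i)" for s x
    by (simp add: WW_def power2_eq_square algebra_simps sum.distrib sum_subtractf sum_distrib_left)
  have "WZ \<le> 0"
  proof (rule quad_nonpos[where C=ZZ])
    fix t :: real assume t: "0 < t" "t \<le> 1"
    have "WW \<le> D (\<lambda>i. (1 + t) * z i + 0 * k0 i)" using Q[OF k0, of "1 + t" 0] Dz DzW t by linarith
    also have "\<dots> = (\<Sum>i\<in>I. (w i - t * z i)\<^sup>2)" unfolding exp by simp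
    finally show "0 \<le> - 2 * t * WZ + t\<^sup>2 * ZZ" unfolding exp2 WZ_def ZZ_def by simp
  qed (simp add: ZZ_def sum_nonneg)
  moreover have "- WZ \<le> 0"
  proof (rule quad_nonpos[where C=ZZ])
    fix t :: real assume t: "0 < t" "t \<le> 1"
    have "WW \<le> D (\<lambda>i. (1 - t) * z i + 0 * k0 i)" using Q[OF k0, of "1 - t" 0] Dz DzW t by linarith
    also have "\<dots> = (\<Sum>i\<in>I. (w i - (- t) * z i)\<^sup>2)" unfolding exp by simp
    finally show "0 \<le> - 2 * t * (- WZ) + t\<^sup>2 * ZZ" unfolding exp2 WZ_def ZZ_def by simp
  qed (simp add: ZZ_def sum_nonneg)
  ultimately have WZ0: "WZ = 0" by linarith
  have WK: "(\<Sum>i\<in>I. w i * k i) \<le> 0" if k: "k \<in> K" for k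
  proof (rule quad_nonpos[where C="\<Sum>i\<in>I. k i * k i"])
    fix t :: real assume t: "0 < t" "t \<le> 1"
    have "WW \<le> D (\<lambda>i. 1 * z i + t * k i)" using Q[OF k, of 1 t] Dz DzW t by linarith
    also have "\<dots> = (\<Sum>i\<in>I. (w i - t * k i)\<^sup>2)" unfolding exp by simp
    finally show "0 \<le> - 2 * t * (\<Sum>i\<in>I. w i * k i) + t\<^sup>2 * (\<Sum>i\<in>I. k i * k i)" unfolding exp2 by simp
  qed (simp add: sum_nonneg)
  show ?thesis
  proof (intro exI[of _ "\<lambda>i. - w i"] conjI ballI)
    fix k assume "k \<in> K"
    then show "0 \<le> (\<Sum>i\<in>I. - w i * k i)" using WK by (simp add: sum_negf)
  next
    have "(\<Sum>i\<in>I. - w i * p i) = (\<Sum>i\<in>I. - (w i * w i + w i * z i))"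
      by (rule sum.cong) (auto simp: w_def algebra_simps)
    also have "\<dots> = - (WW + WZ)" by (simp only: WW_def WZ_def sum_negf sum.distrib)
    finally have "(\<Sum>i\<in>I. - w i * p i) = - (WW + WZ)" .
    then show "(\<Sum>i\<in>I. - w i * p i) < 0" using WZ0 DzW Dz2 \<delta>d d by linarith
  qed
qed



lemma vsp_sm: "x \<in> Vsp \<Longrightarrow> signed_measure (fst x) \<and> signed_measure (snd x)"
  by (auto simp: Vsp_def Mzero_def Msp_def)

lemma sint_scale:
  assumes "signed_measure \<mu>" "bmf f"
  shows "sint (\<lambda>A. a * \<mu> A) f = a * sint \<mu> f"
  using sint_lin[OF assms(1) assms(1) assms(2), of a 0] by simp

definition Lmap :: "('a::topological_space smeasure \<times> 'a smeasure) \<Rightarrow> (('a \<Rightarrow> real) \<times> bool) \<Rightarrow> real" where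
  "Lmap x = (\<lambda>i. sint (if snd i then fst x else snd x) (fst i))"

lemma Lmap_sum:
  assumes sm: "signed_measure (fst x)" "signed_measure (snd x)" and F: "finite F"
    and bF: "\<And>f. f \<in> F \<Longrightarrow> bmf f"
  shows "(\<Sum>i\<in>F \<times> UNIV. u i * Lmap x i) =
    sint (fst x) (\<lambda>y. \<Sum>f\<in>F. u (f, True) * f y) + sint (snd x) (\<lambda>y. \<Sum>f\<in>F. u (f, False) * f y)"
proof -
  have "(\<Sum>i\<in>F \<times> UNIV. u i * Lmap x i) = (\<Sum>(f, b)\<in>F \<times> UNIV. u (f, b) * Lmap x (f, b))"
    by (rule sum.cong) auto
  also have "\<dots> = (\<Sum>f\<in>F. \<Sum>b\<in>UNIV. u (f, b) * Lmap x (f, b))"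
    by (rule sum.cartesian_product[symmetric])
  also have "\<dots> = (\<Sum>f\<in>F. u (f, True) * sint (fst x) f + u (f, False) * sint (snd x) f)"
    by (simp add: UNIV_bool Lmap_def add.commute)
  also have "\<dots> = (\<Sum>f\<in>F. u (f, True) * sint (fst x) f) + (\<Sum>f\<in>F. u (f, False) * sint (snd x) f)"
    by (simp add: sum.distrib)
  also have "\<dots> = sint (fst x) (\<lambda>y. \<Sum>f\<in>F. u (f, True) * f y) + sint (snd x) (\<lambda>y. \<Sum>f\<in>F. u (f, False) * f y)"
    using conjunct2[OF sint_sum[OF sm(1) F bF, where a="\<lambda>f. u (f, True)"]]
      conjunct2[OF sint_sum[OF sm(2) F bF, where a="\<lambda>f. u (f, False)"]] by (simp only:)
  finally show ?thesis .
qed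



lemma far_aux:
  fixes A B X Pv c \<epsilon> \<epsilon>' :: real
  assumes "\<epsilon> \<le> \<bar>A - Pv\<bar>" "\<bar>B - X\<bar> < \<epsilon>'" "0 \<le> c" "c * \<epsilon>' \<le> \<epsilon> / 2" "A = c * B" "0 < \<epsilon>"
  shows "(\<epsilon> / 2)\<^sup>2 \<le> (Pv - c * X)\<^sup>2"
proof -
  have "\<bar>c * B - c * X\<bar> = c * \<bar>B - X\<bar>" using assms(3) by (simp add: abs_mult right_diff_distrib[symmetric])
  also have "\<dots> \<le> c * \<epsilon>'" using assms(2,3) by (intro mult_left_mono) auto
  finally have "\<bar>c * B - c * X\<bar> \<le> \<epsilon> / 2" using assms(4) by linarith
  then have "\<epsilon> / 2 \<le> \<bar>Pv - c * X\<bar>" using assms(1,5) by linarith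
  then have "(\<epsilon> / 2)\<^sup>2 \<le> \<bar>Pv - c * X\<bar>\<^sup>2" using assms(6) by (intro power_mono) auto
  then show ?thesis by simp
qed

theorem lemma3p2:
  fixes P :: "(('a::t2_space) smeasure \<times> 'a smeasure) set"
    and \<eta>0 T0 :: "'a \<Rightarrow> real"
    and v w :: "'a smeasure"
  assumes "compact (UNIV :: 'a set)"
    and "kelvin_planck P"
    and "CD_pair P \<eta>0 T0"
    and "(v, w) \<in> Vsp"
    and "sint v \<eta>0 - sint w (\<lambda>x. 1 / T0 x) = 0"
    and "(v, w) \<notin> hatP P"
  shows "\<exists>\<eta> T. CD_pair P \<eta> T \<and> sint v \<eta> - sint w (\<lambda>x. 1 / T x) < 0"
proof -
  note cU = assms(1) and kp = assms(2) and cd = assms(3) and vw = assms(4) and eq0 = assms(5) and nin = assms(6)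
  define S where "S = {((\<lambda>A. c * v A), (\<lambda>A. c * w A)) | c v w. c \<ge> 0 \<and> (v, w) \<in> P}"
  have hatS: "hatP P = wstar_closure S" by (simp add: hatP_def S_def)
  have PV: "P \<subseteq> Vsp" and cvx: "convex_pairs (hatP P)"
    using kp by (auto simp: kelvin_planck_def thermo_theory_def)
  have zero_in: "((\<lambda>A. 0), (\<lambda>A. 0)) \<in> hatP P"
    using kp unfolding kelvin_planck_def by blast
  have hatV: "hatP P \<subseteq> Vsp" unfolding hatS wstar_closure_def by auto
  have smv: "signed_measure v" "signed_measure w" using vsp_sm[OF vw] by auto
  have "\<exists>F \<epsilon>. finite F \<and> (\<forall>f\<in>F. continuous_on UNIV f) \<and> \<epsilon> > 0 \<and>
     (\<forall>y\<in>S. \<exists>f\<in>F. \<not> (\<bar>sint (fst y) f - sint v f\<bar> < \<epsilon> \<and> \<bar>sint (snd y) f - sint w f\<bar> < \<epsilon>))"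
    using nin vw unfolding hatS wstar_closure_def by (simp add: not_less)
  then obtain F \<epsilon> where F: "finite F" and Fc: "\<And>f. f \<in> F \<Longrightarrow> continuous_on UNIV f" and \<epsilon>: "\<epsilon> > 0"
    and Fsep: "\<And>y. y \<in> S \<Longrightarrow> \<exists>f\<in>F. \<not> (\<bar>sint (fst y) f - sint v f\<bar> < \<epsilon> \<and> \<bar>sint (snd y) f - sint w f\<bar> < \<epsilon>)"
    by blast
  have bF: "\<And>f. f \<in> F \<Longrightarrow> bmf f" using Fc bmf_cont[OF cU] by blast
  define I where "I = F \<times> (UNIV :: bool set)"
  define p where "p = Lmap (v, w)"
  have I: "finite I" using F by (simp add: I_def)
  define LI where "LI x = (\<lambda>i. if i \<in> I then Lmap x i else 0)" for x
  define K where "K = {(\<lambda>i. c * LI x i) | c x. c \<ge> 0 \<and> x \<in> hatP P}"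
  have Lcomb: "LI ((\<lambda>A. t * fst x1 A + (1 - t) * fst x2 A), (\<lambda>A. t * snd x1 A + (1 - t) * snd x2 A)) i
      = t * LI x1 i + (1 - t) * LI x2 i" if "x1 \<in> hatP P" "x2 \<in> hatP P" for x1 x2 t i
  proof (cases "i \<in> I")
    case True
    have s1: "signed_measure (fst x1)" "signed_measure (snd x1)" using vsp_sm that hatV by blast+
    have s2: "signed_measure (fst x2)" "signed_measure (snd x2)" using vsp_sm that hatV by blast+
    have b: "bmf (fst i)" using bF True by (auto simp: I_def)
    show ?thesis unfolding LI_def Lmap_def using True sint_lin[OF s1(1) s2(1) b] sint_lin[OF s1(2) s2(2) b] by simp
  qed (simp add: LI_def)
  have cone: "(\<lambda>i. a * k1 i + b * k2 i) \<in> K" if h: "k1 \<in> K" "k2 \<in> K" "0 \<le> a" "0 \<le> b" for k1 k2 a b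
  proof -
    obtain c1 x1 where k1: "k1 = (\<lambda>i. c1 * LI x1 i)" "c1 \<ge> 0" "x1 \<in> hatP P" using h(1) unfolding K_def by blast
    obtain c2 x2 where k2: "k2 = (\<lambda>i. c2 * LI x2 i)" "c2 \<ge> 0" "x2 \<in> hatP P" using h(2) unfolding K_def by blast
    define s where "s = a * c1 + b * c2"
    show ?thesis
    proof (cases "s = 0")
      case True
      then have "a * c1 = 0" "b * c2 = 0" using k1 k2 h by (auto simp: s_def add_nonneg_eq_0_iff)
      then have "(\<lambda>i. a * k1 i + b * k2 i) = (\<lambda>i. 0 * LI x1 i)" using k1 k2 by (auto simp: mult.assoc[symmetric])
      then show ?thesis using k1 unfolding K_def by blast
    next
      case False
      have "0 \<le> a * c1" "0 \<le> b * c2" using k1 k2 h by auto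
      then have s0: "s > 0" using False by (simp add: s_def)
      define t where "t = a * c1 / s"
      have t: "0 \<le> t" "t \<le> 1" using s0 k1 k2 h by (auto simp: t_def s_def field_simps)
      define xt where "xt = ((\<lambda>A. t * fst x1 A + (1 - t) * fst x2 A), (\<lambda>A. t * snd x1 A + (1 - t) * snd x2 A))"
      have xt: "xt \<in> hatP P" using cvx k1 k2 t unfolding convex_pairs_def xt_def by blast
      have "(\<lambda>i. a * k1 i + b * k2 i) = (\<lambda>i. s * LI xt i)"
      proof
        fix i
        have st: "s * t = a * c1" using s0 by (simp add: t_def)
        have st2: "s * (1 - t) = b * c2" using s0 by (simp add: t_def s_def right_diff_distrib)
        have "s * (t * LI x1 i + (1 - t) * LI x2 i) = (s * t) * LI x1 i + (s * (1 - t)) * LI x2 i"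
          by (simp add: algebra_simps)
        also have "\<dots> = a * k1 i + b * k2 i" unfolding st st2 k1 k2 by simp
        finally have "s * (t * LI x1 i + (1 - t) * LI x2 i) = a * k1 i + b * k2 i" .
        moreover have "LI xt i = t * LI x1 i + (1 - t) * LI x2 i"
          unfolding xt_def by (rule Lcomb[OF k1(3) k2(3)])
        ultimately show "a * k1 i + b * k2 i = s * LI xt i" by simp
      qed
      moreover have "(\<lambda>i. s * LI xt i) \<in> K" unfolding K_def using xt s0 by (intro CollectI exI[of _ s] exI[of _ xt]) auto
      ultimately show ?thesis by simp
    qed
  qed
  define p where "p = LI (v, w)"
  have ne: "K \<noteq> {}" using zero_in unfolding K_def by blast
  have far: "(\<epsilon> / 2)\<^sup>2 \<le> (\<Sum>i\<in>I. (p i - k i)\<^sup>2)" if k: "k \<in> K" for k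
  proof -
    obtain c x where kc: "k = (\<lambda>i. c * LI x i)" "c \<ge> 0" "x \<in> hatP P" using k unfolding K_def by blast
    have xcl: "x \<in> wstar_closure S" using kc hatS by simp
    define \<epsilon>' where "\<epsilon>' = \<epsilon> / (2 * (c + 1))"
    have \<epsilon>'0: "\<epsilon>' > 0" using \<epsilon> kc by (simp add: \<epsilon>'_def)
    have c\<epsilon>': "c * \<epsilon>' \<le> \<epsilon> / 2"
    proof -
      have "c * \<epsilon>' = (\<epsilon> / 2) * (c / (c + 1))" using kc by (simp add: \<epsilon>'_def field_simps)
      also have "\<dots> \<le> (\<epsilon> / 2) * 1" using kc \<epsilon> by (intro mult_left_mono) auto
      finally show ?thesis by simp
    qed
    obtain y where yS: "y \<in> S" and yc: "\<forall>f\<in>F. \<bar>sint (fst y) f - sint (fst x) f\<bar> < \<epsilon>' \<and> \<bar>sint (snd y) f - sint (snd x) f\<bar> < \<epsilon>'"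
      using xcl F Fc \<epsilon>'0 unfolding wstar_closure_def by blast
    obtain c' v0 w0 where y: "y = ((\<lambda>A. c' * v0 A), (\<lambda>A. c' * w0 A))" "c' \<ge> 0" "(v0, w0) \<in> P"
      using yS unfolding S_def by blast
    have sm0: "signed_measure v0" "signed_measure w0" using vsp_sm[of "(v0, w0)"] y PV by auto
    define cy where "cy = ((\<lambda>A. (c * c') * v0 A), (\<lambda>A. (c * c') * w0 A))"
    have cyS: "cy \<in> S" unfolding S_def cy_def using y kc by (intro CollectI exI[of _ "c * c'"] exI[of _ v0] exI[of _ w0]) auto
    obtain f where f: "f \<in> F" and fn: "\<not> (\<bar>sint (fst cy) f - sint v f\<bar> < \<epsilon> \<and> \<bar>sint (snd cy) f - sint w f\<bar> < \<epsilon>)"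
      using Fsep[OF cyS] by blast
    have bf: "bmf f" using bF f by blast
    have e1: "sint (fst cy) f = c * sint (fst y) f"
      using sint_scale[OF sm0(1) bf, of "c * c'"] sint_scale[OF sm0(1) bf, of c'] by (simp add: cy_def y)
    have e2: "sint (snd cy) f = c * sint (snd y) f"
      using sint_scale[OF sm0(2) bf, of "c * c'"] sint_scale[OF sm0(2) bf, of c'] by (simp add: cy_def y)
    have iT: "(f, True) \<in> I" "(f, False) \<in> I" using f by (auto simp: I_def)
    have "\<exists>i\<in>I. (\<epsilon> / 2)\<^sup>2 \<le> (p i - k i)\<^sup>2"
    proof (cases "\<bar>sint (fst cy) f - sint v f\<bar> < \<epsilon>")
      case False
      have "(\<epsilon> / 2)\<^sup>2 \<le> (sint v f - c * sint (fst x) f)\<^sup>2"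
        by (rule far_aux[OF _ _ kc(2) c\<epsilon>' e1 \<epsilon>]) (use False yc f in auto)
      then show ?thesis using iT by (intro bexI[of _ "(f, True)"]) (auto simp: p_def kc LI_def Lmap_def)
    next
      case True
      then have nn: "\<not> \<bar>sint (snd cy) f - sint w f\<bar> < \<epsilon>" using fn by blast
      have "(\<epsilon> / 2)\<^sup>2 \<le> (sint w f - c * sint (snd x) f)\<^sup>2"
        by (rule far_aux[OF _ _ kc(2) c\<epsilon>' e2 \<epsilon>]) (use nn yc f in auto)
      then show ?thesis using iT by (intro bexI[of _ "(f, False)"]) (auto simp: p_def kc LI_def Lmap_def)
    qed
    then obtain i where i: "i \<in> I" "(\<epsilon> / 2)\<^sup>2 \<le> (p i - k i)\<^sup>2" by blast
    have "(p i - k i)\<^sup>2 \<le> (\<Sum>i\<in>I. (p i - k i)\<^sup>2)" using I i by (intro member_le_sum) auto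
    then show ?thesis using i by linarith
  qed
  obtain u where uK: "\<forall>k\<in>K. 0 \<le> (\<Sum>i\<in>I. u i * k i)" and up: "(\<Sum>i\<in>I. u i * p i) < 0"
  proof -
    have d: "0 < (\<epsilon> / 2)\<^sup>2" using \<epsilon> by simp
    show ?thesis using sep_finite[OF I cone ne far d] that by blast
  qed
  define \<alpha> where "\<alpha> y = (\<Sum>f\<in>F. u (f, True) * f y)" for y
  define \<beta> where "\<beta> y = (\<Sum>f\<in>F. u (f, False) * f y)" for y
  have LIsum: "(\<Sum>i\<in>I. u i * LI x i) = sint (fst x) \<alpha> + sint (snd x) \<beta>" if "x \<in> Vsp" for x
  proof -
    have "(\<Sum>i\<in>I. u i * LI x i) = (\<Sum>i\<in>F \<times> UNIV. u i * Lmap x i)"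
      unfolding I_def LI_def by (rule sum.cong) auto
    also have "\<dots> = sint (fst x) \<alpha> + sint (snd x) \<beta>"
      unfolding \<alpha>_def \<beta>_def using vsp_sm[OF that] F bF by (intro Lmap_sum) auto
    finally show ?thesis .
  qed
  have Pin: "x \<in> hatP P" if x: "x \<in> P" for x
  proof -
    have xV: "x \<in> Vsp" using x PV by auto
    have "x = ((\<lambda>A. 1 * fst x A), (\<lambda>A. 1 * snd x A))" by simp
    then have "x \<in> S" unfolding S_def using x by (intro CollectI exI[of _ 1] exI[of _ "fst x"] exI[of _ "snd x"]) auto
    then show ?thesis unfolding hatS wstar_closure_def using xV
      by (intro CollectI conjI allI impI) (auto intro!: bexI[of _ x])
  qed
  have posP: "0 \<le> sint dm \<alpha> + sint q \<beta>" if dq: "(dm, q) \<in> P" for dm q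
  proof -
    have h: "(\<lambda>i. 1 * LI (dm, q) i) \<in> K" unfolding K_def
      by (intro CollectI exI[of _ 1] exI[of _ "(dm, q)"]) (use Pin[OF dq] in auto)
    have "0 \<le> (\<Sum>i\<in>I. u i * (\<lambda>i. 1 * LI (dm, q) i) i)" by (rule bspec[OF uK h])
    then have "0 \<le> (\<Sum>i\<in>I. u i * LI (dm, q) i)" by simp
    moreover have "(dm, q) \<in> Vsp" using dq PV by blast
    ultimately show ?thesis using LIsum[of "(dm, q)"] by simp
  qed
  have negv: "sint v \<alpha> + sint w \<beta> < 0" using up LIsum[OF vw] by (simp add: p_def)
  have \<alpha>c: "continuous_on UNIV \<alpha>" unfolding \<alpha>_def using Fc by (intro continuous_intros) auto
  have \<beta>c: "continuous_on UNIV \<beta>" unfolding \<beta>_def using Fc by (intro continuous_intros) auto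
  have b\<alpha>: "bmf \<alpha>" by (rule bmf_cont[OF cU \<alpha>c])
  have b\<beta>: "bmf \<beta>" by (rule bmf_cont[OF cU \<beta>c])
  have T0: "continuous_on UNIV \<eta>0" "continuous_on UNIV T0" "\<And>x. T0 x > 0"
    and cd0: "\<forall>(dm, q) \<in> P. sint dm \<eta>0 \<ge> sint q (\<lambda>x. 1 / T0 x)"
    using cd unfolding CD_pair_def by auto
  have iTc: "continuous_on UNIV (\<lambda>x. 1 / T0 x)" using T0 by (intro continuous_intros) (auto simp: less_imp_neq[symmetric])
  have b\<eta>0: "bmf \<eta>0" by (rule bmf_cont[OF cU T0(1)])
  have biT: "bmf (\<lambda>x. 1 / T0 x)" by (rule bmf_cont[OF cU iTc])
  obtain x0 where x0: "\<And>y. 1 / T0 x0 \<le> 1 / T0 y"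
    using continuous_attains_inf[OF cU _ iTc] by auto
  define m where "m = 1 / T0 x0"
  have m0: "m > 0" using T0(3)[of x0] by (simp add: m_def)
  obtain B\<beta> where B\<beta>: "\<And>x. \<bar>\<beta> x\<bar> \<le> B\<beta>" using b\<beta> unfolding bmf_def by blast
  have B0: "B\<beta> \<ge> 0" using B\<beta>[of x0] by linarith
  define lam where "lam = m / (2 * (B\<beta> + 1))"
  have lam0: "lam > 0" using m0 B0 by (simp add: lam_def)
  define g where "g x = 1 * (1 / T0 x) + (- lam) * \<beta> x" for x
  have gpos: "g x > 0" for x
  proof -
    have "lam * \<bar>\<beta> x\<bar> \<le> lam * B\<beta>" using lam0 B\<beta>[of x] by (intro mult_left_mono) auto
    also have "lam * B\<beta> < m"
    proof -
      have "lam * B\<beta> = m * (B\<beta> / (2 * (B\<beta> + 1)))" by (simp add: lam_def field_simps)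
      also have "\<dots> < m * 1" using m0 B0 by (intro mult_strict_left_mono) (auto simp: field_simps)
      finally show ?thesis by simp
    qed
    finally have "lam * \<beta> x < m" using lam0 by (smt (verit) abs_ge_self mult_left_mono)
    moreover have "m \<le> 1 / T0 x" using x0 by (simp add: m_def)
    ultimately show ?thesis by (simp add: g_def)
  qed
  define T where "T x = 1 / g x" for x
  define \<eta> where "\<eta> x = 1 * \<eta>0 x + lam * \<alpha> x" for x
  have iT: "(\<lambda>x. 1 / T x) = g" using gpos by (auto simp: T_def)
  have gc: "continuous_on UNIV g" unfolding g_def
    by (intro continuous_on_add continuous_on_mult continuous_on_const iTc \<beta>c)
  have sg: "sint \<mu> (\<lambda>x. 1 / T x) = sint \<mu> (\<lambda>x. 1 / T0 x) - lam * sint \<mu> \<beta>" if "signed_measure \<mu>" for \<mu>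
    unfolding iT g_def using sint_fun_lin[OF that biT b\<beta>, of 1 "- lam"] by simp
  have se: "sint \<mu> \<eta> = sint \<mu> \<eta>0 + lam * sint \<mu> \<alpha>" if "signed_measure \<mu>" for \<mu>
    unfolding \<eta>_def using sint_fun_lin[OF that b\<eta>0 b\<alpha>, of 1 lam] by simp
  have CD: "CD_pair P \<eta> T"
    unfolding CD_pair_def
  proof (intro conjI allI ballI)
    show "continuous_on UNIV \<eta>" unfolding \<eta>_def using T0(1) \<alpha>c by (intro continuous_intros)
    show "continuous_on UNIV T" unfolding T_def using gc gpos by (intro continuous_intros) (auto simp: less_imp_neq[symmetric])
    show "\<And>x. 0 < T x" using gpos by (simp add: T_def)
    fix z assume z: "z \<in> P"
    obtain dm q where zq: "z = (dm, q)" by (cases z)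
    have dq: "(dm, q) \<in> P" using z zq by simp
    have sm: "signed_measure dm" "signed_measure q" using vsp_sm[of "(dm, q)"] dq PV by auto
    have "sint dm \<eta>0 \<ge> sint q (\<lambda>x. 1 / T0 x)" using cd0 dq by auto
    moreover have "0 \<le> lam * (sint dm \<alpha> + sint q \<beta>)" using lam0 posP[OF dq] by simp
    ultimately have "sint dm \<eta> \<ge> sint q (\<lambda>x. 1 / T x)"
      using se[OF sm(1)] sg[OF sm(2)] by (simp add: algebra_simps)
    then show "case z of (dm, q) \<Rightarrow> sint q (\<lambda>x. 1 / T x) \<le> sint dm \<eta>" using zq by simp
  qed
  have "sint v \<eta> - sint w (\<lambda>x. 1 / T x) = (sint v \<eta>0 - sint w (\<lambda>x. 1 / T0 x)) + lam * (sint v \<alpha> + sint w \<beta>)"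
    using se[OF smv(1)] sg[OF smv(2)] by (simp add: algebra_simps)
  also have "\<dots> < 0" using eq0 negv lam0 by (simp add: mult_pos_neg)
  finally show ?thesis using CD by blast
qed


end
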